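(* Let $x_i\in K_i$ for every $1\le i\le N$, let $x\in K$, and let $i_0\in\{1,\dots,N\}$ be such that $x\in K_{i_0}$. Then for every integer $m\le 0$ and every $\epsilon>0$ there exist an integer $k\ge m$ and a set $B\in\mathcal{A}_m$ with $P^m_x(B)<\epsilon$ such that for all $\sigma\in\Sigma\setminus B$ and all $n\ge k$, $$d\big(Z^x_{mn}(\sigma),Y^{x_1\dots x_N}_{mn}(\sigma)\big)\le a^{\frac{n-m+1}{2}}\,d(x,x_{i_0}).$$
   Context: A contractive Markov system (CMS) with average contracting rate $0<a<1$ consists of: a finite directed multigraph $(V,E,i,t)$ with vertex set $V=\{1,\dots,N\}$, finite edge set $E$, and maps $i,t:E\to V$ giving the initial and terminal vertex of each edge; a complete metric space $(K,d)$ partitioned into non-empty Borel sets $K_1,\dots,K_N$; Borel measurable maps $w_e:K\to K$ ($e\in E$) with $w_e(K_{i(e)})\subset K_{t(e)}$; Borel measurable functions $p_e:K\to[0,\infty)$ with $\sum_{e\in E}p_e(x)=1$ for all $x\in K$ and $p_e=0$ on $K\setminus K_{i(e)}$; and such that $\sum_{e\in E}p_e(x)d(w_ex,w_ey)\leq a\,d(x,y)$ for all $x,y\in K_j$, $j=1,\dots,N$. Let $\Sigma:=E^{\mathbb{Z}}$. For $m\le n$ the cylinder $_m[e_m,\dots,e_n]:=\{\sigma\in\Sigma:\sigma_j=e_j,\ m\le j\le n\}$. For an integer $m\le 1$, $\mathcal{A}_m$ is the $\sigma$-algebra generated by the cylinders $_m[e_m,\dots,e_n]$, $n\ge m$. For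 $x\in K$, $P^m_x$ is the probability measure on $(\Sigma,\mathcal{A}_m)$ with $P^m_x(_m[e_m,\dots,e_n])=p_{e_m}(x)\,p_{e_{m+1}}(w_{e_m}x)\cdots p_{e_n}(w_{e_{n-1}}\circ\cdots\circ w_{e_m}x)$. For $x\in K$ and $m\le n$, $Z^x_{mn}(\sigma):=w_{\sigma_n}\circ\cdots\circ w_{\sigma_m}(x)$; for fixed $x_i\in K_i$, $Y^{x_1\dots x_N}_{mn}(\sigma):=w_{\sigma_n}\circ\cdots\circ w_{\sigma_m}(x_{i(\sigma_m)})$. *)

theory Defs
  imports "HOL-Analysis.Analysis" "HOL-Probability.Probability"
begin

text \<open>Vertices are 1..N (nat), edges are the elements of a
finite type 'e (E = UNIV), the complete metric space K is the whole type 'a,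
Kset j is K_j, ini/ter are the maps i,t, w e and p e are the maps and probabilities.\<close>

definition cms :: "nat \<Rightarrow> ('e::finite \<Rightarrow> nat) \<Rightarrow> ('e \<Rightarrow> nat) \<Rightarrow> (nat \<Rightarrow> 'a::complete_space set)
    \<Rightarrow> ('e \<Rightarrow> 'a \<Rightarrow> 'a) \<Rightarrow> ('e \<Rightarrow> 'a \<Rightarrow> real) \<Rightarrow> real \<Rightarrow> bool" where
  "cms N ini ter Kset w p a \<longleftrightarrow>
     (\<forall>e. ini e \<in> {1..N} \<and> ter e \<in> {1..N}) \<and>
     (\<forall>j\<in>{1..N}. Kset j \<noteq> {} \<and> Kset j \<in> sets borel) \<and>
     (\<forall>j\<in>{1..N}. \<forall>l\<in>{1..N}. j \<noteq> l \<longrightarrow> Kset j \<inter> Kset l = {}) \<and>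
     (\<Union>j\<in>{1..N}. Kset j) = UNIV \<and>
     (\<forall>e. w e \<in> borel_measurable borel \<and> w e ` Kset (ini e) \<subseteq> Kset (ter e)) \<and>
     (\<forall>e. p e \<in> borel_measurable borel \<and> (\<forall>x. p e x \<ge> 0)
          \<and> (\<forall>x. x \<notin> Kset (ini e) \<longrightarrow> p e x = 0)) \<and>
     (\<forall>x. (\<Sum>e\<in>UNIV. p e x) = 1) \<and>
     0 < a \<and> a < 1 \<and>
     (\<forall>j\<in>{1..N}. \<forall>x\<in>Kset j. \<forall>y\<in>Kset j.
        (\<Sum>e\<in>UNIV. p e x * dist (w e x) (w e y)) \<le> a * dist x y)"

definition cyl :: "int \<Rightarrow> 'e list \<Rightarrow> (int \<Rightarrow> 'e) set" where
  "cyl m es = {\<sigma>. \<forall>j<length es. \<sigma> (m + int j) = es ! j}"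

definition Aalg :: "int \<Rightarrow> (int \<Rightarrow> 'e) measure" where
  "Aalg m = sigma UNIV {cyl m es | es. es \<noteq> []}"

fun cylprob :: "('e \<Rightarrow> 'a \<Rightarrow> real) \<Rightarrow> ('e \<Rightarrow> 'a \<Rightarrow> 'a) \<Rightarrow> 'a \<Rightarrow> 'e list \<Rightarrow> real" where
  "cylprob p w x [] = 1"
| "cylprob p w x (e # es) = p e x * cylprob p w (w e x) es"

fun iterw :: "('e \<Rightarrow> 'a \<Rightarrow> 'a) \<Rightarrow> (int \<Rightarrow> 'e) \<Rightarrow> int \<Rightarrow> nat \<Rightarrow> 'a \<Rightarrow> 'a" where
  "iterw w \<sigma> m 0 x = x"
| "iterw w \<sigma> m (Suc k) x = w (\<sigma> (m + int k)) (iterw w \<sigma> m k x)"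

definition Zmn :: "('e \<Rightarrow> 'a \<Rightarrow> 'a) \<Rightarrow> 'a \<Rightarrow> int \<Rightarrow> int \<Rightarrow> (int \<Rightarrow> 'e) \<Rightarrow> 'a" where
  "Zmn w x m n \<sigma> = iterw w \<sigma> m (nat (n - m + 1)) x"

definition Ymn :: "('e \<Rightarrow> 'a \<Rightarrow> 'a) \<Rightarrow> ('e \<Rightarrow> nat) \<Rightarrow> (nat \<Rightarrow> 'a) \<Rightarrow> int \<Rightarrow> int \<Rightarrow> (int \<Rightarrow> 'e) \<Rightarrow> 'a" where
  "Ymn w ini xs m n \<sigma> = iterw w \<sigma> m (nat (n - m + 1)) (xs (ini (\<sigma> m)))"

end

theory Submission
  imports Defs
begin
fun zl :: "('e \<Rightarrow> 'a \<Rightarrow> 'a) \<Rightarrow> 'a \<Rightarrow> 'e list \<Rightarrow> 'a" where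
  "zl w x [] = x"
| "zl w x (e # es) = zl w (w e x) es"

lemma zl_snoc: "zl w x (es @ [e]) = w e (zl w x es)"
  by (induction es arbitrary: x) auto

lemma iterw_zl: "iterw w \<sigma> m L x = zl w x (map (\<lambda>j. \<sigma> (m + int j)) [0..<L])"
  by (induction L) (auto simp: zl_snoc)

lemma cyl_iff: "length es = L \<Longrightarrow> (\<sigma> \<in> cyl m es \<longleftrightarrow> map (\<lambda>j. \<sigma> (m + int j)) [0..<L] = es)"
  unfolding cyl_def by (auto simp: list_eq_iff_nth_eq)

lemma finite_len: "finite {es :: ('e::finite) list. length es = L}"
  using finite_lists_length_eq[of "UNIV :: 'e set" L] by simp

lemma sum_len_Suc:
  fixes f :: "('e::finite) list \<Rightarrow> real"
  shows "(\<Sum>es\<in>{es. length es = Suc L}. f es) = (\<Sum>e\<in>UNIV. \<Sum>es\<in>{es. length es = L}. f (e # es))"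
proof -
  have eq: "{es. length es = Suc L} = (\<lambda>(e, es). e # es) ` (UNIV \<times> {es. length es = L})"
    by (auto simp: length_Suc_conv image_def)
  have inj: "inj_on (\<lambda>(e, es). e # es) (UNIV \<times> {es::'e list. length es = L})"
    by (auto simp: inj_on_def)
  show ?thesis
    unfolding eq sum.reindex[OF inj] by (simp add: sum.cartesian_product split_def)
qed

lemma cylprob_nonneg: "(\<And>e x. p e x \<ge> 0) \<Longrightarrow> cylprob p w x es \<ge> 0"
  by (induction es arbitrary: x) auto

lemma cms_ini:
  assumes "cms N ini ter Kset w p a" "j \<in> {1..N}" "x \<in> Kset j" "p e x \<noteq> 0"
  shows "ini e = j"
proof -
  from assms have "x \<in> Kset (ini e)" unfolding cms_def by metis
  moreover have "ini e \<in> {1..N}" using assms(1) unfolding cms_def by blast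
  ultimately show ?thesis using assms(1-3) unfolding cms_def by blast
qed

lemma contr:
  assumes c: "cms N ini ter Kset w p a"
  shows "j \<in> {1..N} \<Longrightarrow> x \<in> Kset j \<Longrightarrow> y \<in> Kset j \<Longrightarrow>
    (\<Sum>es\<in>{es. length es = L}. cylprob p w x es * dist (zl w x es) (zl w y es)) \<le> a ^ L * dist x y"
proof (induction L arbitrary: x y j)
  case 0
  then show ?case by simp
next
  case (Suc L)
  have pn: "\<And>e x. p e x \<ge> 0" and a0: "a > 0" using c unfolding cms_def by auto
  have "(\<Sum>es\<in>{es. length es = Suc L}. cylprob p w x es * dist (zl w x es) (zl w y es))
      = (\<Sum>e\<in>UNIV. p e x * (\<Sum>es\<in>{es. length es = L}. cylprob p w (w e x) es * dist (zl w (w e x) es) (zl w (w e y) es)))"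
    by (simp add: sum_len_Suc sum_distrib_left mult.assoc)
  also have "\<dots> \<le> (\<Sum>e\<in>UNIV. p e x * (a ^ L * dist (w e x) (w e y)))"
  proof (rule sum_mono)
    fix e
    show "p e x * (\<Sum>es\<in>{es. length es = L}. cylprob p w (w e x) es * dist (zl w (w e x) es) (zl w (w e y) es))
        \<le> p e x * (a ^ L * dist (w e x) (w e y))"
    proof (cases "p e x = 0")
      case True then show ?thesis by simp
    next
      case False
      then have ie: "ini e = j" using cms_ini[OF c Suc.prems(1,2)] by blast
      have "w e x \<in> Kset (ter e)" "w e y \<in> Kset (ter e)" "ter e \<in> {1..N}"
        using c Suc.prems ie unfolding cms_def by blast+
      from Suc.IH[OF this(3,1,2)] show ?thesis using pn by (simp add: mult_left_mono)
    qed
  qed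
  also have "\<dots> = a ^ L * (\<Sum>e\<in>UNIV. p e x * dist (w e x) (w e y))"
    by (simp add: sum_distrib_left algebra_simps)
  also have "\<dots> \<le> a ^ L * (a * dist x y)"
    using c Suc.prems a0 unfolding cms_def by (intro mult_left_mono) auto
  finally show ?case by (simp add: mult.assoc mult.commute mult.left_commute)
qed

lemma cyl_sets:
  assumes "sets P = sets (Aalg m)" "es \<noteq> []"
  shows "cyl m es \<in> sets P"
  using assms by (auto simp: Aalg_def intro!: sigma_sets.Basic)

lemma event_bound:
  fixes P :: "(int \<Rightarrow> 'e::finite) measure"
  assumes ps: "prob_space P" and sP: "sets P = sets (Aalg m)"
    and cy: "\<forall>es. es \<noteq> [] \<longrightarrow> emeasure P (cyl m es) = ennreal (cylprob p w x es)"
    and c: "cms N ini ter Kset w p a"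
    and j: "j \<in> {1..N}" "x \<in> Kset j" "y \<in> Kset j" and t: "t > 0" and L: "L > 0"
  shows "{\<sigma>. t < dist (iterw w \<sigma> m L x) (iterw w \<sigma> m L y)} \<in> sets P"
    "measure P {\<sigma>. t < dist (iterw w \<sigma> m L x) (iterw w \<sigma> m L y)} \<le> a ^ L * dist x y / t"
proof -
  interpret prob_space P by (rule ps)
  have pn: "\<And>e x. p e x \<ge> 0" using c unfolding cms_def by auto
  define S where "S = {es. length es = L \<and> t < dist (zl w x es) (zl w y es)}"
  have fS: "finite S" unfolding S_def by (rule finite_subset[OF _ finite_len[of L]]) auto
  have ne: "\<And>es. es \<in> S \<Longrightarrow> es \<noteq> []" using L unfolding S_def by auto
  have eq: "{\<sigma>. t < dist (iterw w \<sigma> m L x) (iterw w \<sigma> m L y)} = (\<Union>es\<in>S. cyl m es)"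
  proof (intro equalityI subsetI)
    fix \<sigma> assume "\<sigma> \<in> {\<sigma>. t < dist (iterw w \<sigma> m L x) (iterw w \<sigma> m L y)}"
    then have "map (\<lambda>j. \<sigma> (m + int j)) [0..<L] \<in> S" "\<sigma> \<in> cyl m (map (\<lambda>j. \<sigma> (m + int j)) [0..<L])"
      unfolding S_def by (auto simp: iterw_zl cyl_iff)
    then show "\<sigma> \<in> (\<Union>es\<in>S. cyl m es)" by blast
  next
    fix \<sigma> assume "\<sigma> \<in> (\<Union>es\<in>S. cyl m es)"
    then obtain es where "es \<in> S" "\<sigma> \<in> cyl m es" by blast
    then show "\<sigma> \<in> {\<sigma>. t < dist (iterw w \<sigma> m L x) (iterw w \<sigma> m L y)}"
      unfolding S_def by (auto simp: iterw_zl cyl_iff)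
  qed
  have cs: "cyl m ` S \<subseteq> sets P" using cyl_sets[OF sP] ne by auto
  show "{\<sigma>. t < dist (iterw w \<sigma> m L x) (iterw w \<sigma> m L y)} \<in> sets P"
    unfolding eq using cs fS by auto
  have dj: "disjoint_family_on (cyl m) S"
    unfolding disjoint_family_on_def S_def by (auto simp: cyl_iff)
  have mc: "\<And>es. es \<in> S \<Longrightarrow> measure P (cyl m es) = cylprob p w x es"
    using cy ne cylprob_nonneg[where p=p, OF pn] by (simp add: measure_def)
  have "measure P {\<sigma>. t < dist (iterw w \<sigma> m L x) (iterw w \<sigma> m L y)} = (\<Sum>es\<in>S. cylprob p w x es)"
    unfolding eq using finite_measure_finite_Union[OF fS cs dj] mc by simp
  also have "\<dots> \<le> (\<Sum>es\<in>S. cylprob p w x es * dist (zl w x es) (zl w y es) / t)"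
  proof (rule sum_mono)
    fix es assume "es \<in> S"
    then have "t < dist (zl w x es) (zl w y es)" unfolding S_def by auto
    then show "cylprob p w x es \<le> cylprob p w x es * dist (zl w x es) (zl w y es) / t"
      using t cylprob_nonneg[where p=p and w=w and x=x and es=es, OF pn]
      by (simp add: field_simps) (metis less_imp_le mult.commute mult_left_mono)
  qed
  also have "\<dots> \<le> (\<Sum>es\<in>{es. length es = L}. cylprob p w x es * dist (zl w x es) (zl w y es) / t)"
    by (rule sum_mono2[OF finite_len]) (auto simp: S_def intro!: divide_nonneg_pos mult_nonneg_nonneg cylprob_nonneg pn t)
  also have "\<dots> = (\<Sum>es\<in>{es. length es = L}. cylprob p w x es * dist (zl w x es) (zl w y es)) / t"
    by (simp add: sum_divide_distrib)
  also have "\<dots> \<le> a ^ L * dist x y / t"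
    using contr[OF c j] t by (simp add: divide_right_mono)
  finally show "measure P {\<sigma>. t < dist (iterw w \<sigma> m L x) (iterw w \<sigma> m L y)} \<le> a ^ L * dist x y / t" .
qed

theorem lemma5:
  fixes N :: nat and ini ter :: "'e::finite \<Rightarrow> nat" and Kset :: "nat \<Rightarrow> 'a::complete_space set"
    and w :: "'e \<Rightarrow> 'a \<Rightarrow> 'a" and p :: "'e \<Rightarrow> 'a \<Rightarrow> real" and a :: real
    and xs :: "nat \<Rightarrow> 'a" and x :: 'a and i0 :: nat and m :: int and \<epsilon> :: real
    and P :: "(int \<Rightarrow> 'e) measure"
  assumes "cms N ini ter Kset w p a"
    and "\<forall>i\<in>{1..N}. xs i \<in> Kset i"
    and "i0 \<in> {1..N}" and "x \<in> Kset i0"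
    and "m \<le> 0" and "\<epsilon> > 0"
    and "prob_space P" and "sets P = sets (Aalg m)"
    and "\<forall>es. es \<noteq> [] \<longrightarrow> emeasure P (cyl m es) = ennreal (cylprob p w x es)"
  shows "\<exists>k\<ge>m. \<exists>B\<in>sets (Aalg m). measure P B < \<epsilon> \<and>
           (\<forall>\<sigma>\<in>UNIV - B. \<forall>n\<ge>k.
              dist (Zmn w x m n \<sigma>) (Ymn w ini xs m n \<sigma>)
                \<le> a powr (real_of_int (n - m + 1) / 2) * dist x (xs i0))"
proof -
  note c = assms(1)
  interpret prob_space P by (rule assms(7))
  have a0: "0 < a" and a1: "a < 1" using c unfolding cms_def by auto
  define r where "r = sqrt a"
  have r0: "0 < r" and r1: "r < 1" using a0 a1 unfolding r_def by auto
  have ar: "a = r\<^sup>2" using a0 unfolding r_def by simp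
  define x0 where "x0 = xs i0"
  have x0K: "x0 \<in> Kset i0" using assms(2,3) unfolding x0_def by blast
  define d where "d = dist x x0"
  obtain L0 where L0: "r ^ L0 < \<epsilon> * (1 - r)"
    using real_arch_pow_inv[of "\<epsilon> * (1 - r)" r] assms(6) r1 by auto
  define k where "k = m + int L0"
  define A where "A j = {\<sigma>. r ^ Suc (L0 + j) * d < dist (iterw w \<sigma> m (Suc (L0 + j)) x) (iterw w \<sigma> m (Suc (L0 + j)) x0)}" for j
  have AS: "A j \<in> sets P \<and> measure P (A j) \<le> r ^ Suc (L0 + j)" for j
  proof (cases "d = 0")
    case True
    then have "A j = {}" unfolding A_def d_def by auto
    then show ?thesis using r0 by simp
  next
    case False
    then have dp: "d > 0" unfolding d_def by simp
    let ?L = "Suc (L0 + j)"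
    have tp: "r ^ ?L * d > 0" using dp r0 by simp
    note eb = event_bound[OF assms(7,8,9) c assms(3,4) x0K tp, of ?L]
    have "a ^ ?L * dist x x0 / (r ^ ?L * d) = r ^ ?L"
      using dp r0 unfolding ar d_def by (simp add: power_mult[symmetric] field_simps power2_eq_square power_mult_distrib)
    then show ?thesis using eb unfolding A_def by simp
  qed
  define B0 where "B0 = (\<Union>e\<in>{e. p e x = 0}. cyl m [e])"
  have B0S: "B0 \<in> sets P" unfolding B0_def using cyl_sets[OF assms(8)] by auto
  have "measure P B0 \<le> (\<Sum>e\<in>{e. p e x = 0}. measure P (cyl m [e]))"
    unfolding B0_def by (rule finite_measure_subadditive_finite) (use cyl_sets[OF assms(8)] in auto)
  also have "\<dots> = 0" using assms(9) by (simp add: measure_def)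
  finally have B0m: "measure P B0 = 0" by (simp add: measure_nonneg antisym)
  have summ: "summable (\<lambda>j. r ^ Suc (L0 + j))"
    using summable_geometric[of r] r0 r1 by (simp add: power_add summable_mult)
  have summA: "summable (\<lambda>j. measure P (A j))"
    by (rule summable_comparison_test[OF _ summ]) (use AS in auto)
  have "measure P (\<Union>j. A j) \<le> (\<Sum>j. measure P (A j))"
    by (rule finite_measure_subadditive_countably) (use AS summA in auto)
  also have "\<dots> \<le> (\<Sum>j. r ^ Suc (L0 + j))"
    by (rule suminf_le[OF _ summA summ]) (use AS in auto)
  also have "\<dots> = r ^ Suc L0 * (\<Sum>j. r ^ j)"
    by (subst suminf_mult[symmetric]) (use summable_geometric[of r] r0 r1 in \<open>auto simp: power_add mult.assoc\<close>)
  also have "\<dots> = r ^ Suc L0 / (1 - r)"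
    using suminf_geometric[of r] r0 r1 by simp
  also have "\<dots> \<le> r ^ L0 / (1 - r)"
    using r0 r1 by (intro divide_right_mono) (auto simp: mult_left_le_one_le)
  also have "\<dots> < \<epsilon>" using L0 r1 by (simp add: field_simps)
  finally have Am: "measure P (\<Union>j. A j) < \<epsilon>" .
  define B where "B = B0 \<union> (\<Union>j. A j)"
  have US: "(\<Union>j. A j) \<in> sets P" using AS by auto
  have BS: "B \<in> sets (Aalg m)" unfolding B_def using B0S US assms(8) by auto
  have "measure P B \<le> measure P B0 + measure P (\<Union>j. A j)"
    unfolding B_def using B0S US by (rule measure_Un_le)
  then have Bm: "measure P B < \<epsilon>" using B0m Am by simp
  have pt: "dist (Zmn w x m n \<sigma>) (Ymn w ini xs m n \<sigma>)
                \<le> a powr (real_of_int (n - m + 1) / 2) * dist x (xs i0)"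
    if \<sigma>: "\<sigma> \<notin> B" and n: "n \<ge> k" for \<sigma> n
  proof -
    define j where "j = nat (n - k)"
    have Lj: "nat (n - m + 1) = Suc (L0 + j)" unfolding j_def k_def using n k_def by auto
    have "p (\<sigma> m) x \<noteq> 0" using \<sigma> unfolding B_def B0_def by (auto simp: cyl_def)
    then have ie: "ini (\<sigma> m) = i0" using cms_ini[OF c assms(3,4)] by blast
    have "\<sigma> \<notin> A j" using \<sigma> unfolding B_def by auto
    then have "dist (Zmn w x m n \<sigma>) (Ymn w ini xs m n \<sigma>) \<le> r ^ Suc (L0 + j) * d"
      unfolding A_def Zmn_def Ymn_def ie Lj x0_def by auto
    moreover have "a powr (real_of_int (n - m + 1) / 2) = r ^ Suc (L0 + j)"
    proof -
      have "real_of_int (n - m + 1) = real (Suc (L0 + j))" using Lj n k_def by linarith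
      then have "a powr (real_of_int (n - m + 1) / 2) = (a powr (1/2)) powr real (Suc (L0 + j))"
        by (simp add: powr_powr add.commute)
      also have "\<dots> = r ^ Suc (L0 + j)" unfolding r_def using a0
        using powr_realpow[of "sqrt a" "Suc (L0 + j)"] by (simp add: powr_half_sqrt del: of_nat_Suc)
      finally show ?thesis .
    qed
    ultimately show ?thesis unfolding d_def x0_def by simp
  qed
  show ?thesis
    apply (rule exI[of _ k])
    using BS Bm pt unfolding k_def by auto
qed

end
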